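(* Let $0<p<1/2$, let $c>0$ be a constant, and let $n$ be such that $k=c\log_2 n$ is an integer with $k\ge 2$. Let $s\in\{0,1\}^n$ be an arbitrary (unknown) source string, let $x\in\{0,1\}^k$, and let $i\in\{1,\dots,n-k+1\}$. Let $\epsilon_n>0$ and $\delta\in(0,1)$. (1) There is an estimator $\hat K_{s,x}[i]$, computed from $T$ independent traces of $s$, such that if $T\ge \ln\!\left(\frac{2}{\delta}\right)\epsilon_n^{-2} f_c(n)$ then $|\hat K_{s,x}[i]-K_{s,x}[i]|<\epsilon_n$ with probability at least $1-\delta$. (2) There is an estimator $\hat K_s$ of the whole $k$-mer density map, computed from $T$ independent traces of $s$, such that if $T\ge \ln\!\left(\frac{2n^{1+c}}{\delta}\right)\epsilon_n^{-2} f_c(n)$ then $\|\hat K_s-K_s\|_\infty<\epsilon_n$ with probability at least $1-\delta$.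
   Context: Deletion channel: for $s\in\{0,1\}^n$ and deletion probability $p\in[0,1)$, a trace $\tilde S$ of $s$ is the (possibly shorter) string obtained by deleting each bit of $s$ independently with probability $p$; distinct traces are independent. Strings are indexed from 1 and $s[a:b]=(s[a],\dots,s[b])$. For $x\in\{0,1\}^k$ and $i\in\{1,\dots,n-k+1\}$, the $k$-mer density is $K_{s,x}[i]=\sum_{j=1}^{n-k+1}\binom{j-1}{i-1}(1-p)^{i-1}p^{j-i}\,\mathbb 1\{s[j:j+k-1]=x\}$ (with $\binom{j-1}{i-1}=0$ if $j<i$). The $k$-mer density map $K_s$ is the vector obtained by concatenating $K_{s,x}$ over all $x\in\{0,1\}^k$, and $\|\cdot\|_\infty$ is the max of absolute values of entries. $H(q)=-q\log_2 q-(1-q)\log_2(1-q)$ is the binary entropy. Define $\alpha_c(p)=1+c\log_2\!\frac{1-p}{p}+\frac{cH\left(1-\frac{p}{1-p}\right)+c\log_2\frac{p}{1-p}}{1-\frac{p}{1-p}}$ and $f_c(n)=\frac{\left(1+2n^{\alpha_c(p)}\right)^2}{2\,n^{2c\log_2(1-p)-1}}$. *)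

theory Defs
  imports "HOL-Probability.Probability"
begin

(* Deletion channel: each bit deleted independently with probability p
   (bernoulli_pmf p yields True with probability p, meaning "delete"). *)
fun trace_pmf :: "real \<Rightarrow> bool list \<Rightarrow> bool list pmf" where
  "trace_pmf p [] = return_pmf []"
| "trace_pmf p (b # bs) =
     bernoulli_pmf p \<bind> (\<lambda>del. trace_pmf p bs \<bind> (\<lambda>t.
       return_pmf (if del then t else b # t)))"

fun traces_pmf :: "real \<Rightarrow> bool list \<Rightarrow> nat \<Rightarrow> bool list list pmf" where
  "traces_pmf p s 0 = return_pmf []"
| "traces_pmf p s (Suc T) =
     trace_pmf p s \<bind> (\<lambda>t. traces_pmf p s T \<bind> (\<lambda>ts. return_pmf (t # ts)))"

(* substring s[a:b] with 1-based indexing, here s[j : j+k-1] *)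
definition substr :: "bool list \<Rightarrow> nat \<Rightarrow> nat \<Rightarrow> bool list" where
  "substr s j k = take k (drop (j - 1) s)"

definition kmer_density :: "real \<Rightarrow> bool list \<Rightarrow> bool list \<Rightarrow> nat \<Rightarrow> real" where
  "kmer_density p s x i =
     (\<Sum>j = 1..length s + 1 - length x.
        real ((j - 1) choose (i - 1)) * (1 - p) ^ (i - 1) * p ^ (j - i) *
        (if substr s j (length x) = x then 1 else 0))"

definition bin_entropy :: "real \<Rightarrow> real" where
  "bin_entropy q = - q * log 2 q - (1 - q) * log 2 (1 - q)"

definition alpha_c :: "real \<Rightarrow> real \<Rightarrow> real" where
  "alpha_c c p = 1 + c * log 2 ((1 - p) / p)
     + (c * bin_entropy (1 - p / (1 - p)) + c * log 2 (p / (1 - p))) / (1 - p / (1 - p))"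

definition f_c :: "real \<Rightarrow> real \<Rightarrow> nat \<Rightarrow> real" where
  "f_c c p n = (1 + 2 * real n powr alpha_c c p) ^ 2
     / (2 * real n powr (2 * c * log 2 (1 - p) - 1))"

end

theory Submission
  imports Defs
begin


lemma integral_bind_pmf_bounded:
  fixes f :: "'b \<Rightarrow> real"
  assumes "\<And>x. \<bar>f x\<bar> \<le> B"
  shows "measure_pmf.expectation (bind_pmf M N) f =
         measure_pmf.expectation M (\<lambda>x. measure_pmf.expectation (N x) f)"
  unfolding measure_pmf_bind
  apply (rule integral_bind[where K="count_space UNIV" and B=B and B'=1])
  using assms by (auto simp: measurable_measure_pmf measure_pmf.emeasure_space_1 measure_pmf_in_subprob_algebra intro: measure_pmf.finite_measure_axioms)

lemma E_trace_cons:
  fixes f :: "bool list \<Rightarrow> real"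
  assumes "0 \<le> p" "p \<le> 1" "\<And>t. \<bar>f t\<bar> \<le> B"
  shows "measure_pmf.expectation (trace_pmf p (a#s)) f =
     p * measure_pmf.expectation (trace_pmf p s) f + (1-p) * measure_pmf.expectation (trace_pmf p s) (\<lambda>t. f (a#t))"
proof -
  have "measure_pmf.expectation (trace_pmf p (a#s)) f =
     measure_pmf.expectation (bernoulli_pmf p) (\<lambda>del. measure_pmf.expectation (map_pmf (\<lambda>t. if del then t else a#t) (trace_pmf p s)) f)"
    by (simp only: trace_pmf.simps map_pmf_def[symmetric], rule integral_bind_pmf_bounded[OF assms(3)])
  also have "\<dots> = p * measure_pmf.expectation (trace_pmf p s) f + (1-p) * measure_pmf.expectation (trace_pmf p s) (\<lambda>t. f (a#t))"
    using assms by simp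
  finally show ?thesis .
qed

fun Cw :: "real \<Rightarrow> bool list \<Rightarrow> bool list \<Rightarrow> real" where
  "Cw q [] t = 1"
| "Cw q (b#y) [] = 0"
| "Cw q (b#y) (a#t) = (if a = b then Cw q y t else 0) + q * Cw q (b#y) t"

fun Dw :: "real \<Rightarrow> bool list \<Rightarrow> bool list \<Rightarrow> real" where
  "Dw q [] t = 0"
| "Dw q (b#y) [] = 0"
| "Dw q (b#y) (a#t) = (if a = b then Cw q y t else 0)"

lemma Cw_bound:
  assumes "0 \<le> r" "r < 1" "\<bar>q\<bar> \<le> r"
  shows "\<bar>Cw q y t\<bar> \<le> (1/(1-r)) ^ length y"
  using assms
proof (induction q y t rule: Cw.induct)
  case (1 q t) then show ?case by simp
next
  case (2 q b y) then show ?case using assms by (simp add: one_le_power)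
next
  case (3 q b y a t)
  have h1: "\<bar>(if a = b then Cw q y t else 0)\<bar> \<le> (1/(1-r)) ^ length y"
    using 3 by (auto simp: zero_le_power)
  have h2: "\<bar>q * Cw q (b#y) t\<bar> \<le> r * (1/(1-r)) ^ Suc (length y)"
    unfolding abs_mult by (rule mult_mono) (use 3 in auto)
  have "(1/(1-r)) ^ length y + r * (1/(1-r)) ^ Suc (length y) = (1/(1-r)) ^ Suc (length y)"
    using assms by (simp add: field_simps)
  then show ?case using h1 h2 abs_triangle_ineq[of "(if a = b then Cw q y t else 0)" "q * Cw q (b#y) t"] by simp
qed


lemma set_trace_pmf: "set_pmf (trace_pmf p s) \<subseteq> {t. length t \<le> length s}"
  by (induction s) (auto simp: set_bind_pmf)

lemma finite_set_trace_pmf: "finite (set_pmf (trace_pmf p s))"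
proof -
  have "finite {t :: bool list. set t \<subseteq> UNIV \<and> length t \<le> length s}"
    by (rule finite_lists_length_le) simp
  then show ?thesis using set_trace_pmf[of p s] by (auto intro: finite_subset)
qed

lemma integrable_trace[simp]: "integrable (measure_pmf (trace_pmf p s)) (f :: bool list \<Rightarrow> real)"
  by (rule integrable_measure_pmf_finite[OF finite_set_trace_pmf])

lemma E_Cw:
  assumes p: "0 < p" "p < 1/2"
  shows "measure_pmf.expectation (trace_pmf p s) (Cw (- p/(1-p)) y)
       = (1-p)^length y * (if take (length y) s = y then 1 else 0)"
proof (induction s arbitrary: y)
  case Nil
  then show ?case by (cases y) auto
next
  case (Cons a s)
  define q where "q = - p/(1-p)"
  define r where "r = p/(1-p)"
  have r: "0 \<le> r" "r < 1" "\<bar>q\<bar> \<le> r" using p by (auto simp: r_def q_def field_simps)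
  have E: "measure_pmf.expectation (trace_pmf p (a#s)) (Cw q y) =
     p * measure_pmf.expectation (trace_pmf p s) (Cw q y) + (1-p) * measure_pmf.expectation (trace_pmf p s) (\<lambda>t. Cw q y (a#t))"
    by (rule E_trace_cons[where B="(1/(1-r)) ^ length y"]) (use p Cw_bound[OF r] in auto)
  show ?case
  proof (cases y)
    case Nil
    then show ?thesis using E by (simp add: q_def)
  next
    case (Cons b y')
    have "measure_pmf.expectation (trace_pmf p s) (\<lambda>t. Cw q y (a#t)) =
      measure_pmf.expectation (trace_pmf p s) (\<lambda>t. (if a = b then Cw q y' t else 0)) + q * measure_pmf.expectation (trace_pmf p s) (Cw q y)"
      using Cons by simp
    then have "measure_pmf.expectation (trace_pmf p (a#s)) (Cw q y) =
       (1-p) * measure_pmf.expectation (trace_pmf p s) (\<lambda>t. (if a = b then Cw q y' t else 0)) + (p + (1-p)*q) * measure_pmf.expectation (trace_pmf p s) (Cw q y)"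
      using E by (simp add: algebra_simps)
    also have "p + (1-p)*q = 0" using p by (simp add: q_def field_simps)
    also have "measure_pmf.expectation (trace_pmf p s) (\<lambda>t. (if a = b then Cw q y' t else 0)) =
       (if a = b then measure_pmf.expectation (trace_pmf p s) (Cw q y') else 0)" by simp
    finally have "measure_pmf.expectation (trace_pmf p (a#s)) (Cw q y) =
       (1-p) * (if a = b then measure_pmf.expectation (trace_pmf p s) (Cw q y') else 0)" by simp
    then have "measure_pmf.expectation (trace_pmf p (a#s)) (Cw q y) = (1-p)^length y * (if take (length y) (a#s) = y then 1 else 0)"
      using Cons.IH[of y', folded q_def] \<open>y = b # y'\<close> by auto
    then show ?thesis unfolding q_def .
  qed
qed


lemma Dw_bound:
  assumes "0 \<le> r" "r < 1" "\<bar>q\<bar> \<le> r"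
  shows "\<bar>Dw q x t\<bar> \<le> (1/(1-r)) ^ length x"
proof (cases "(q,x,t)" rule: Dw.cases)
  case (3 q' b y a t')
  then have "\<bar>Cw q y t'\<bar> \<le> (1/(1-r)) ^ length y" using Cw_bound[OF assms] by blast
  moreover have "(1/(1-r)) ^ length y \<le> (1/(1-r)) ^ length x"
    using 3 assms by (intro power_increasing) auto
  moreover have "(0::real) \<le> (1/(1-r)) ^ length x" using assms by simp
  ultimately show ?thesis using 3 by auto
qed (use assms in auto)

definition Kr :: "real \<Rightarrow> bool list \<Rightarrow> bool list \<Rightarrow> nat \<Rightarrow> real" where
  "Kr p x s i = (\<Sum>j<length s. real (j choose i) * (1-p)^i * p^(j-i) *
        (if take (length x) (drop j s) = x then 1 else 0))"

lemma Kr_Nil[simp]: "Kr p x [] i = 0" by (simp add: Kr_def)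

lemma Kr_Cons:
  "Kr p x (a#s) i = p * Kr p x s i +
     (if i = 0 then (if take (length x) (a#s) = x then 1 else 0) else (1-p) * Kr p x s (i-1))"
proof -
  define ind where "ind j = (if take (length x) (drop j s) = x then 1 else (0::real))" for j
  have "Kr p x (a#s) i = real (0 choose i) * (1-p)^i * p^(0-i) * (if take (length x) (a#s) = x then 1 else 0)
      + (\<Sum>j<length s. real (Suc j choose i) * (1-p)^i * p^(Suc j-i) * ind j)"
    unfolding Kr_def ind_def by (simp only: length_Cons sum.lessThan_Suc_shift) simp
  also have "\<dots> = p * Kr p x s i +
     (if i = 0 then (if take (length x) (a#s) = x then 1 else 0) else (1-p) * Kr p x s (i-1))"
  proof (cases i)
    case 0
    then show ?thesis by (simp add: Kr_def ind_def sum_distrib_left algebra_simps)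
  next
    case (Suc m)
    have t: "real (Suc j choose Suc m) * (1-p)^Suc m * p^(Suc j - Suc m) * ind j
       = p * (real (j choose Suc m) * (1-p)^Suc m * p^(j - Suc m) * ind j)
       + (1-p) * (real (j choose m) * (1-p)^m * p^(j - m) * ind j)" for j
    proof (cases "Suc m \<le> j")
      case True
      then have "p^(j - m) = p * p^(j - Suc m)"
        by (metis Suc_diff_le diff_Suc_Suc power_Suc)
      then show ?thesis by (simp add: algebra_simps)
    next
      case False
      then have z: "j choose Suc m = 0" by (simp add: binomial_eq_0)
      have z2: "Suc j choose Suc m = j choose m" using z by simp
      show ?thesis by (simp add: z z2 algebra_simps del: binomial_Suc_Suc)
    qed
    have "(\<Sum>j<length s. real (Suc j choose i) * (1-p)^i * p^(Suc j-i) * ind j)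
      = (\<Sum>j<length s. p * (real (j choose Suc m) * (1-p)^Suc m * p^(j - Suc m) * ind j)
       + (1-p) * (real (j choose m) * (1-p)^m * p^(j - m) * ind j))"
      unfolding Suc by (rule sum.cong[OF refl t])
    also have "\<dots> = p * Kr p x s i + (1-p) * Kr p x s (i-1)"
      unfolding sum.distrib sum_distrib_left[symmetric] Kr_def ind_def Suc by simp
    finally show ?thesis using Suc by simp
  qed
  finally show ?thesis .
qed


lemma E_Dw:
  assumes p: "0 < p" "p < 1/2" and x: "x \<noteq> []"
  shows "measure_pmf.expectation (trace_pmf p s) (\<lambda>t. Dw (- p/(1-p)) x (drop i t))
       = (1-p)^length x * Kr p x s i"
proof (induction s arbitrary: i)
  case Nil
  then show ?case using x by (cases x) auto
next
  case (Cons a s)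
  define q where "q = - p/(1-p)"
  define r where "r = p/(1-p)"
  have r: "0 \<le> r" "r < 1" "\<bar>q\<bar> \<le> r" using p by (auto simp: r_def q_def field_simps)
  obtain b y where xb: "x = b # y" using x by (cases x) auto
  have E: "measure_pmf.expectation (trace_pmf p (a#s)) (\<lambda>t. Dw q x (drop i t)) =
     p * measure_pmf.expectation (trace_pmf p s) (\<lambda>t. Dw q x (drop i t)) + (1-p) * measure_pmf.expectation (trace_pmf p s) (\<lambda>t. Dw q x (drop i (a#t)))"
    by (rule E_trace_cons[where B="(1/(1-r)) ^ length x"]) (use p Dw_bound[OF r] in auto)
  have IH: "measure_pmf.expectation (trace_pmf p s) (\<lambda>t. Dw q x (drop j t)) = (1-p)^length x * Kr p x s j" for j
    using Cons.IH[of j] unfolding q_def .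
  have "measure_pmf.expectation (trace_pmf p (a#s)) (\<lambda>t. Dw q x (drop i t)) = (1-p)^length x * Kr p x (a#s) i"
  proof (cases i)
    case 0
    have "measure_pmf.expectation (trace_pmf p s) (\<lambda>t. Dw q x (drop i (a#t)))
        = (if a = b then measure_pmf.expectation (trace_pmf p s) (Cw q y) else 0)"
      using 0 xb by simp
    also have "\<dots> = (if a = b then (1-p)^length y * (if take (length y) s = y then 1 else 0) else 0)"
      using E_Cw[OF p, of s y] unfolding q_def by simp
    finally have L: "measure_pmf.expectation (trace_pmf p (a#s)) (\<lambda>t. Dw q x (drop i t)) =
       p * ((1-p)^length x * Kr p x s i) + (1-p) * (if a = b then (1-p)^length y * (if take (length y) s = y then 1 else 0) else 0)"
      using E IH[of i] by (simp del: trace_pmf.simps)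
    show ?thesis unfolding L using 0 xb by (simp add: Kr_Cons algebra_simps del: trace_pmf.simps)
  next
    case (Suc m)
    have "measure_pmf.expectation (trace_pmf p s) (\<lambda>t. Dw q x (drop i (a#t))) = (1-p)^length x * Kr p x s m"
      using IH[of m] Suc by simp
    then show ?thesis using E IH[of i] Suc by (simp add: Kr_Cons algebra_simps del: trace_pmf.simps)
  qed
  then show ?case unfolding q_def .
qed


lemma kmer_Kr:
  assumes "1 \<le> i" "x \<noteq> []"
  shows "kmer_density p s x i = Kr p x s (i-1)"
proof -
  define N where "N = length s + 1 - length x"
  define f where "f j = real (j choose (i-1)) * (1-p)^(i-1) * p^(j-(i-1)) *
        (if take (length x) (drop j s) = x then 1 else 0)" for j
  have "kmer_density p s x i = (\<Sum>j<N. f j)"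
    unfolding kmer_density_def N_def f_def sum_bounds_lt_plus1[symmetric] substr_def
    using assms(1) by (intro sum.cong refl) (auto simp: Suc_diff_le)
  also have "\<dots> = (\<Sum>j<length s. f j)"
  proof (rule sum.mono_neutral_left)
    show "{..<N} \<subseteq> {..<length s}" using assms(2) by (cases x) (auto simp: N_def)
    show "\<forall>j\<in>{..<length s} - {..<N}. f j = 0"
    proof
      fix j assume "j \<in> {..<length s} - {..<N}"
      then have "length (take (length x) (drop j s)) < length x" using assms(2) by (auto simp: N_def)
      then show "f j = 0" unfolding f_def by auto
    qed
  qed auto
  also have "\<dots> = Kr p x s (i-1)" unfolding Kr_def f_def ..
  finally show ?thesis .
qed


lemma traces_Pi: "traces_pmf p s T = map_pmf (\<lambda>f. map f (rev [0..<T])) (Pi_pmf {..<T} [] (\<lambda>_. trace_pmf p s))"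
proof (induction T)
  case 0
  then show ?case by simp
next
  case (Suc T)
  have "Pi_pmf {..<Suc T} [] (\<lambda>_. trace_pmf p s) = Pi_pmf (insert T {..<T}) [] (\<lambda>_. trace_pmf p s)"
    by (simp add: lessThan_Suc)
  also have "\<dots> = do {y \<leftarrow> trace_pmf p s; f \<leftarrow> Pi_pmf {..<T} [] (\<lambda>_. trace_pmf p s); return_pmf (f(T := y))}"
    by (rule Pi_pmf_insert') auto
  finally have e: "Pi_pmf {..<Suc T} [] (\<lambda>_. trace_pmf p s) = \<dots>" .
  have m: "map (f(T := y)) (rev [0..<T]) = map f (rev [0..<T])" for f :: "nat \<Rightarrow> bool list" and y
    by (auto intro: map_cong)
  show ?case unfolding e traces_pmf.simps Suc
    by (simp add: map_bind_pmf bind_map_pmf map_pmf_def[symmetric] m pmf.map_comp o_def)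
qed



lemma hoeff_traces:
  fixes g :: "bool list \<Rightarrow> real"
  assumes gB: "\<And>t. \<bar>g t\<bar> \<le> B" and B: "B > 0" and T: "T > 0" and eps: "\<epsilon> > 0"
  shows "measure_pmf.prob (traces_pmf p s T)
           {ts. \<bar>sum_list (map g ts) / length ts - measure_pmf.expectation (trace_pmf p s) g\<bar> \<ge> \<epsilon>}
         \<le> 2 * exp (- real T * \<epsilon>^2 / (2 * B^2))"
proof -
  define P where "P = Pi_pmf {..<T} [] (\<lambda>_. trace_pmf p s)"
  define \<mu> where "\<mu> = measure_pmf.expectation (trace_pmf p s) g"
  have comp: "map_pmf (\<lambda>f. f i) P = trace_pmf p s" if "i < T" for i
    unfolding P_def using that by (simp add: Pi_pmf_component)
  have distr_eq: "distr (measure_pmf P) borel (\<lambda>f. g (f i)) = distr (measure_pmf (trace_pmf p s)) borel g"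
    if "i < T" for i
  proof -
    have "distr (measure_pmf P) borel (\<lambda>f. g (f i)) = distr (distr (measure_pmf P) (count_space UNIV) (\<lambda>f. f i)) borel g"
      by (subst distr_distr) (simp_all add: o_def)
    also have "distr (measure_pmf P) (count_space UNIV) (\<lambda>f. f i) = measure_pmf (trace_pmf p s)"
      using comp[OF that] map_pmf_rep_eq[of "\<lambda>f. f i" P] by simp
    finally show ?thesis .
  qed
  interpret H: Hoeffding_ineq_iid "measure_pmf P" "{..<T}" "\<lambda>i f. g (f i)" "\<lambda>f. g (f 0)" "-B" "B" "measure_pmf.expectation P (\<lambda>f. g (f 0))"
  proof unfold_locales
    show "prob_space.indep_vars (measure_pmf P) (\<lambda>_. borel) (\<lambda>i f. g (f i)) {..<T}"
      unfolding P_def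
      by (intro prob_space.indep_vars_compose2[OF _ indep_vars_Pi_pmf])
         (auto simp: measure_pmf.prob_space_axioms)
    show "distr (measure_pmf P) borel (\<lambda>f. g (f i)) = distr (measure_pmf P) borel (\<lambda>f. g (f 0))"
      if "i \<in> {..<T}" for i
      proof -
        have "i < T" "0 < T" using that T by auto
        then show ?thesis by (simp only: distr_eq)
      qed
    show "AE x in measure_pmf P. g (x 0) \<in> {- B..B}"
    proof (rule AE_I2)
      fix x show "g (x 0) \<in> {- B..B}" using gB[of "x 0"] by (auto simp: abs_le_iff)
    qed
  next
    show "finite {..<T}" by simp
  next
    show "measure_pmf.random_variable P borel (\<lambda>f. g (f 0))" by simp
  qed (rule Pure.reflexive)
  have muE: "measure_pmf.expectation P (\<lambda>f. g (f 0)) = \<mu>"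
  proof -
    have "measure_pmf.expectation P (\<lambda>f. g (f 0)) = measure_pmf.expectation (map_pmf (\<lambda>f. f 0) P) g"
      by simp
    moreover have c0: "map_pmf (\<lambda>f. f 0) P = trace_pmf p s" using comp T by blast
    ultimately show ?thesis unfolding \<mu>_def by (simp only: c0)
  qed
  have main: "measure_pmf.prob P {x. \<bar>(\<Sum>i<T. g (x i)) - real T * \<mu>\<bar> \<ge> T * \<epsilon>}
      \<le> 2 * exp (-2 * (T*\<epsilon>)\<^sup>2 / (real T * (B - - B)\<^sup>2))"
  proof -
    have h: "measure_pmf.prob P {x \<in> space (measure_pmf P). \<bar>(\<Sum>i\<in>{..<T}. g (x i)) - real (card {..<T}) * measure_pmf.expectation P (\<lambda>f. g (f 0))\<bar> \<ge> T * \<epsilon>}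
       \<le> 2 * exp (-2 * (T*\<epsilon>)\<^sup>2 / (real (card {..<T}) * (B - - B)\<^sup>2))"
      by (rule H.Hoeffding_ineq_abs_ge) (use eps B T in auto)
    then show ?thesis by (simp only: muE card_lessThan space_measure_pmf UNIV_I simp_thms Collect_conj_eq Int_UNIV_left)
  qed
  have "2 * exp (-2 * (T*\<epsilon>)\<^sup>2 / (real T * (B - - B)\<^sup>2)) = 2 * exp (- real T * \<epsilon>^2 / (2 * B^2))"
    using T B by (simp add: power2_eq_square field_simps)
  moreover
  have "measure_pmf.prob (traces_pmf p s T)
           {ts. \<bar>sum_list (map g ts) / length ts - \<mu>\<bar> \<ge> \<epsilon>}
       = measure_pmf.prob P {x. \<bar>(\<Sum>i<T. g (x i)) - real T * \<mu>\<bar> \<ge> T * \<epsilon>}"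
  proof -
    have sl: "sum_list (map g (map f (rev [0..<T]))) = (\<Sum>i<T. g (f i))" for f :: "nat \<Rightarrow> bool list"
      by (simp add: sum_list_rev rev_map[symmetric] o_def atLeast0LessThan[symmetric] sum_list_map_eq_sum_count sum_set_upt_conv_sum_list_nat[symmetric])
    have iff: "\<bar>y / real T - \<mu>\<bar> \<ge> \<epsilon> \<longleftrightarrow> \<bar>y - real T * \<mu>\<bar> \<ge> T * \<epsilon>" for y
    proof -
      have "y / real T - \<mu> = (y - real T * \<mu>) / real T" using T by (simp add: field_simps)
      then show ?thesis using T by (simp add: abs_divide pos_le_divide_eq mult.commute)
    qed
    show ?thesis unfolding traces_Pi P_def[symmetric] measure_map_pmf
      by (rule arg_cong[where f="measure_pmf.prob P"]) (auto simp: sl[unfolded map_map] iff)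
  qed
  ultimately show ?thesis using main unfolding \<mu>_def by simp
qed



lemma powr_k:
  assumes n: "(n::real) > 0" and y: "y > 0" and k: "real k = c * log 2 n"
  shows "n powr (c * log 2 y) = y ^ k"
proof -
  have "n powr (c * log 2 y) = exp (c * log 2 y * ln n)" using n by (simp add: powr_def)
  also have "c * log 2 y * ln n = real k * ln y" using k by (simp add: log_def)
  also have "exp (real k * ln y) = y powr real k" using y by (simp add: powr_def)
  also have "\<dots> = y ^ k" using y by (simp add: powr_realpow)
  finally show ?thesis .
qed

lemma alpha_simp:
  assumes p: "0 < p" "p < 1/2"
  shows "alpha_c c p = 1 + c * log 2 (1 / (1 - p/(1-p)))"
proof -
  define r where "r = p/(1-p)"
  have r: "0 < r" "r < 1" using p by (auto simp: r_def field_simps)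
  have pr: "(1-p)/p = 1/r" using p by (simp add: r_def)
  have H: "bin_entropy (1 - r) = - (1-r) * log 2 (1-r) - r * log 2 r"
    by (simp add: bin_entropy_def)
  have "(c * bin_entropy (1 - r) + c * log 2 r) / (1 - r) = c * (log 2 r - log 2 (1-r))"
    using r unfolding H by (simp add: field_simps)
  moreover have "log 2 (1/r) = - log 2 r" using r by (simp add: log_divide)
  moreover have "log 2 (1/(1-r)) = - log 2 (1-r)" using r by (simp add: log_divide)
  ultimately show ?thesis unfolding alpha_c_def r_def[symmetric] pr by (simp add: algebra_simps)
qed

definition Bk :: "real \<Rightarrow> nat \<Rightarrow> real" where
  "Bk p k = (1 / (1 - p/(1-p)))^k / (1-p)^k"

lemma Bk_pos: "0 < p \<Longrightarrow> p < 1/2 \<Longrightarrow> Bk p k > 0"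
  by (simp add: Bk_def field_simps)

lemma fc_bound:
  assumes p: "0 < p" "p < 1/2" and n: "real n \<ge> 1" and k: "real k = c * log 2 (real n)"
  shows "f_c c p n \<ge> 2 * (Bk p k)^2"
proof -
  define A where "A = (1 / (1 - p/(1-p)))^k"
  define D where "D = (1-p)^k"
  have A: "A \<ge> 1" unfolding A_def using p by (intro one_le_power) (auto simp: field_simps)
  have D: "D > 0" unfolding D_def using p by simp
  have n0: "real n > 0" using n by simp
  have "real n powr alpha_c c p = real n * A"
    unfolding alpha_simp[OF p] A_def
    using n0 p by (simp add: powr_add powr_k[OF n0 _ k] field_simps)
  moreover have "real n powr (2 * c * log 2 (1 - p) - 1) = D^2 / real n"
  proof -
    have e: "2 * c * log 2 (1 - p) = c * log 2 ((1-p)^2)" using p by (simp add: log_nat_power)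
    have "real n powr (2 * c * log 2 (1 - p)) = ((1-p)^2)^k"
      unfolding e by (rule powr_k[OF n0 _ k]) (use p in simp)
    then show ?thesis unfolding D_def using n0 by (simp add: powr_diff power_mult[symmetric] mult.commute)
  qed
  ultimately have f: "f_c c p n = (1 + 2 * (real n * A))^2 * real n / (2 * D^2)"
    unfolding f_c_def using n0 by simp
  have "2 * (Bk p k)^2 = (2*A)^2 / (2 * D^2)" unfolding Bk_def A_def[symmetric] D_def[symmetric]
    by (simp add: power_divide)
  also have "\<dots> \<le> (1 + 2 * (real n * A))^2 * real n / (2 * D^2)"
  proof (rule divide_right_mono)
    have "1 * A \<le> real n * A" using A n by (intro mult_right_mono) auto
    then have "2*A \<le> 1 + 2 * (real n * A)" by linarith
    then have "(2*A)^2 \<le> (1 + 2 * (real n * A))^2" using A by (intro power_mono) auto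
    also have "\<dots> \<le> (1 + 2 * (real n * A))^2 * real n" using n by (simp add: mult_le_cancel_left1)
    finally show "(2*A)^2 \<le> (1 + 2 * (real n * A))^2 * real n" .
  qed (use D in auto)
  finally show ?thesis using f by simp
qed

definition gfun :: "real \<Rightarrow> nat \<Rightarrow> bool list \<Rightarrow> nat \<Rightarrow> bool list \<Rightarrow> real" where
  "gfun p k x i t = Dw (- p/(1-p)) x (drop (i-1) t) / (1-p)^k"

definition estf :: "real \<Rightarrow> nat \<Rightarrow> bool list \<Rightarrow> nat \<Rightarrow> bool list list \<Rightarrow> real" where
  "estf p k x i ts = sum_list (map (gfun p k x i) ts) / length ts"

lemma gfun_bound:
  assumes p: "0 < p" "p < 1/2"
  shows "\<bar>gfun p (length x) x i t\<bar> \<le> Bk p (length x)"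
proof -
  define r where "r = p/(1-p)"
  have r: "0 \<le> r" "r < 1" "\<bar>- p/(1-p)\<bar> \<le> r" using p by (auto simp: r_def field_simps)
  have "\<bar>Dw (- p/(1-p)) x (drop (i-1) t)\<bar> \<le> (1/(1-r)) ^ length x" by (rule Dw_bound[OF r])
  then show ?thesis unfolding gfun_def Bk_def r_def[symmetric] using p
    by (simp add: abs_divide divide_right_mono)
qed

lemma gfun_mean:
  assumes p: "0 < p" "p < 1/2" and x: "x \<noteq> []" and i: "1 \<le> i"
  shows "measure_pmf.expectation (trace_pmf p s) (gfun p (length x) x i) = kmer_density p s x i"
proof -
  have "measure_pmf.expectation (trace_pmf p s) (gfun p (length x) x i)
      = measure_pmf.expectation (trace_pmf p s) (\<lambda>t. Dw (- p/(1-p)) x (drop (i-1) t)) / (1-p)^length x"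
    unfolding gfun_def by simp
  also have "\<dots> = Kr p x s (i-1)" using E_Dw[OF p x, of s "i-1"] p by simp
  also have "\<dots> = kmer_density p s x i" using kmer_Kr[OF i x] by simp
  finally show ?thesis .
qed

lemma tail:
  assumes p: "0 < p" "p < 1/2" and x: "x \<noteq> []" and i: "1 \<le> i" and T: "T > 0" and eps: "\<epsilon> > 0"
  shows "measure_pmf.prob (traces_pmf p s T)
           {ts. \<bar>estf p (length x) x i ts - kmer_density p s x i\<bar> \<ge> \<epsilon>}
         \<le> 2 * exp (- real T * \<epsilon>^2 / (2 * (Bk p (length x))^2))"
  using hoeff_traces[of "gfun p (length x) x i" "Bk p (length x)" T \<epsilon> p s, OF gfun_bound[OF p] Bk_pos[OF p] T eps]
  unfolding estf_def gfun_mean[OF p x i] .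

lemma exp_small:
  assumes B: "B > 0" and eps: "\<epsilon> > 0" and f: "f \<ge> 2 * B^2" and M: "M \<ge> 1"
    and T: "real T \<ge> ln M * \<epsilon> powr (-2) * f"
  shows "exp (- real T * \<epsilon>^2 / (2 * B^2)) \<le> 1 / M"
proof -
  have lnM: "ln M \<ge> 0" using M by simp
  have e: "\<epsilon> powr (-2) = 1 / \<epsilon>^2" using eps by (simp add: powr_minus powr_realpow divide_inverse)
  have T': "ln M * (1 / \<epsilon>^2) * f \<le> real T" using T unfolding e .
  have "ln M * f = (ln M * (1 / \<epsilon>^2) * f) * \<epsilon>^2" using eps by (simp add: field_simps)
  also have "\<dots> \<le> real T * \<epsilon>^2" using T' by (rule mult_right_mono) simp
  finally have "real T * \<epsilon>^2 \<ge> ln M * f" .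
  moreover have "ln M * f \<ge> ln M * (2 * B^2)" using f lnM by (rule mult_left_mono)
  ultimately have "real T * \<epsilon>^2 / (2 * B^2) \<ge> ln M" using B by (simp add: field_simps)
  then have "exp (- real T * \<epsilon>^2 / (2 * B^2)) \<le> exp (- ln M)" by simp
  also have "exp (- ln M) = 1 / M" using M by (simp add: exp_minus inverse_eq_divide)
  finally show ?thesis .
qed


theorem theorem1:
  fixes p c :: real and n k :: nat
  assumes hp0: "0 < p" and hp1: "p < 1/2"
    and hc: "c > 0"
    and hk: "real k = c * log 2 (real n)" and hk2: "k \<ge> 2"
  shows
   "(\<forall>x i. length x = k \<longrightarrow> 1 \<le> i \<longrightarrow> i + k \<le> n + 1 \<longrightarrow>
      (\<exists>est :: bool list list \<Rightarrow> real.
         \<forall>s. length s = n \<longrightarrow>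
         (\<forall>(T::nat) (\<epsilon>::real) (\<delta>::real). \<epsilon> > 0 \<longrightarrow> 0 < \<delta> \<longrightarrow> \<delta> < 1 \<longrightarrow>
            real T \<ge> ln (2 / \<delta>) * \<epsilon> powr (-2) * f_c c p n \<longrightarrow>
            measure_pmf.prob (traces_pmf p s T)
              {ts. \<bar>est ts - kmer_density p s x i\<bar> < \<epsilon>} \<ge> 1 - \<delta>)))
    \<and>
    (\<exists>est :: bool list list \<Rightarrow> bool list \<Rightarrow> nat \<Rightarrow> real.
         \<forall>s. length s = n \<longrightarrow>
         (\<forall>(T::nat) (\<epsilon>::real) (\<delta>::real). \<epsilon> > 0 \<longrightarrow> 0 < \<delta> \<longrightarrow> \<delta> < 1 \<longrightarrow>
            real T \<ge> ln (2 * real n powr (1 + c) / \<delta>) * \<epsilon> powr (-2) * f_c c p n \<longrightarrow>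
            measure_pmf.prob (traces_pmf p s T)
              {ts. \<forall>x i. length x = k \<longrightarrow> 1 \<le> i \<longrightarrow> i + k \<le> n + 1 \<longrightarrow>
                    \<bar>est ts x i - kmer_density p s x i\<bar> < \<epsilon>} \<ge> 1 - \<delta>))"
proof -
  have p: "0 < p" "p < 1/2" using hp0 hp1 by auto
  have n2: "n \<ge> 2"
  proof (rule ccontr)
    assume "\<not> n \<ge> 2"
    then have "n = 0 \<or> n = 1" by auto
    then have "real k = 0" using hk by (auto simp: log_def)
    then show False using hk2 by simp
  qed
  have n1: "real n \<ge> 1" using n2 by simp
  define B where "B = Bk p k"
  have B: "B > 0" unfolding B_def by (rule Bk_pos[OF p])
  have fB: "f_c c p n \<ge> 2 * B^2" unfolding B_def by (rule fc_bound[OF p n1 hk])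
  have fpos: "f_c c p n > 0" using fB B by (smt (verit) zero_less_power)
  have Tpos: "T > 0" if "real T \<ge> ln M * \<epsilon> powr (-2) * f_c c p n" "M > 1" "\<epsilon> > 0" for T M \<epsilon>
  proof -
    have "ln M * \<epsilon> powr (-2) * f_c c p n > 0" using that fpos by simp
    then show ?thesis using that(1) by linarith
  qed
  have part1: "\<forall>s. length s = n \<longrightarrow>
         (\<forall>(T::nat) (\<epsilon>::real) (\<delta>::real). \<epsilon> > 0 \<longrightarrow> 0 < \<delta> \<longrightarrow> \<delta> < 1 \<longrightarrow>
            real T \<ge> ln (2 / \<delta>) * \<epsilon> powr (-2) * f_c c p n \<longrightarrow>
            measure_pmf.prob (traces_pmf p s T)
              {ts. \<bar>estf p k x i ts - kmer_density p s x i\<bar> < \<epsilon>} \<ge> 1 - \<delta>)"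
    if x: "length x = k" and i: "1 \<le> i" for x i
  proof (intro allI impI)
    fix s :: "bool list" and T :: nat and \<epsilon> \<delta> :: real
    assume eps: "\<epsilon> > 0" and d: "0 < \<delta>" "\<delta> < 1" and T: "real T \<ge> ln (2 / \<delta>) * \<epsilon> powr (-2) * f_c c p n"
    have x0: "x \<noteq> []" using x hk2 by auto
    have T0: "T > 0" by (rule Tpos[OF T]) (use d eps in auto)
    define A where "A = {ts. \<bar>estf p k x i ts - kmer_density p s x i\<bar> \<ge> \<epsilon>}"
    have "measure_pmf.prob (traces_pmf p s T) A \<le> 2 * exp (- real T * \<epsilon>^2 / (2 * B^2))"
      unfolding A_def B_def using tail[OF p x0 i T0 eps, of s] x by simp
    also have "\<dots> \<le> 2 * (1 / (2/\<delta>))"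
      using exp_small[OF B eps fB _ T] d by simp
    also have "\<dots> = \<delta>" by simp
    finally have "measure_pmf.prob (traces_pmf p s T) A \<le> \<delta>" .
    moreover have "{ts. \<bar>estf p k x i ts - kmer_density p s x i\<bar> < \<epsilon>} = space (measure_pmf (traces_pmf p s T)) - A"
      unfolding A_def by auto
    moreover have "measure_pmf.prob (traces_pmf p s T) (space (measure_pmf (traces_pmf p s T)) - A)
       = 1 - measure_pmf.prob (traces_pmf p s T) A"
      by (rule measure_pmf.prob_compl) simp
    ultimately show "measure_pmf.prob (traces_pmf p s T)
              {ts. \<bar>estf p k x i ts - kmer_density p s x i\<bar> < \<epsilon>} \<ge> 1 - \<delta>" by simp
  qed
  have part2: "\<forall>s. length s = n \<longrightarrow>
         (\<forall>(T::nat) (\<epsilon>::real) (\<delta>::real). \<epsilon> > 0 \<longrightarrow> 0 < \<delta> \<longrightarrow> \<delta> < 1 \<longrightarrow>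
            real T \<ge> ln (2 * real n powr (1 + c) / \<delta>) * \<epsilon> powr (-2) * f_c c p n \<longrightarrow>
            measure_pmf.prob (traces_pmf p s T)
              {ts. \<forall>x i. length x = k \<longrightarrow> 1 \<le> i \<longrightarrow> i + k \<le> n + 1 \<longrightarrow>
                    \<bar>estf p k x i ts - kmer_density p s x i\<bar> < \<epsilon>} \<ge> 1 - \<delta>)"
  proof (intro allI impI)
    fix s :: "bool list" and T :: nat and \<epsilon> \<delta> :: real
    assume eps: "\<epsilon> > 0" and d: "0 < \<delta>" "\<delta> < 1"
      and T: "real T \<ge> ln (2 * real n powr (1 + c) / \<delta>) * \<epsilon> powr (-2) * f_c c p n"
    define N where "N = real n powr (1 + c)"
    have N1: "N \<ge> 1" unfolding N_def using n1 hc by (simp add: ge_one_powr_ge_zero)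
    have M1: "2 * N / \<delta> > 1" using N1 d by (simp add: field_simps)
    have T0: "T > 0" by (rule Tpos[OF T[folded N_def] M1 eps])
    have ex: "exp (- real T * \<epsilon>^2 / (2 * B^2)) \<le> 1 / (2 * N / \<delta>)"
      using exp_small[OF B eps fB _ T[folded N_def]] M1 by simp
    define S where "S = {x :: bool list. length x = k} \<times> {1..n+1-k}"
    define A where "A = (\<lambda>(x, i). {ts. \<bar>estf p k x i ts - kmer_density p s x i\<bar> \<ge> \<epsilon>})"
    have finS: "finite S" unfolding S_def
      using finite_lists_length_eq[of "UNIV :: bool set" k] by simp
    have cardS: "real (card S) \<le> N"
    proof -
      have c1: "card {x :: bool list. length x = k} = 2^k"
        using card_lists_length_eq[of "UNIV :: bool set" k] by (simp add: card_UNIV_bool)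
      have "real (card S) = 2^k * real (n + 1 - k)" unfolding S_def by (simp add: card_cartesian_product c1)
      also have "\<dots> \<le> 2^k * real n" by (intro mult_left_mono) (use hk2 in auto)
      also have "(2::real)^k = real n powr c"
        using powr_k[of "real n" 2 k c] n1 hk by simp
      also have "real n powr c * real n = N" unfolding N_def using n1 by (simp add: powr_add)
      finally show ?thesis .
    qed
    have sub: "space (measure_pmf (traces_pmf p s T)) - {ts. \<forall>x i. length x = k \<longrightarrow> 1 \<le> i \<longrightarrow> i + k \<le> n + 1 \<longrightarrow>
                    \<bar>estf p k x i ts - kmer_density p s x i\<bar> < \<epsilon>} \<subseteq> (\<Union>(A ` S))"
    proof
      fix ts assume "ts \<in> space (measure_pmf (traces_pmf p s T)) - {ts. \<forall>x i. length x = k \<longrightarrow> 1 \<le> i \<longrightarrow> i + k \<le> n + 1 \<longrightarrow>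
                    \<bar>estf p k x i ts - kmer_density p s x i\<bar> < \<epsilon>}"
      then obtain x i where xi: "length x = k" "1 \<le> i" "i + k \<le> n + 1"
        "\<not> \<bar>estf p k x i ts - kmer_density p s x i\<bar> < \<epsilon>" by auto
      then have "(x, i) \<in> S" "ts \<in> A (x, i)" unfolding S_def A_def by auto
      then show "ts \<in> \<Union>(A ` S)" by blast
    qed
    have "measure_pmf.prob (traces_pmf p s T) (\<Union>(A ` S)) \<le> (\<Sum>a\<in>S. measure_pmf.prob (traces_pmf p s T) (A a))"
      by (rule measure_pmf.finite_measure_subadditive_finite[OF finS]) auto
    also have "\<dots> \<le> (\<Sum>a\<in>S. 2 * exp (- real T * \<epsilon>^2 / (2 * B^2)))"
    proof (rule sum_mono)
      fix a assume "a \<in> S"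
      then obtain x i where a: "a = (x, i)" "length x = k" "1 \<le> i" unfolding S_def by auto
      have x0: "x \<noteq> []" using a hk2 by auto
      show "measure_pmf.prob (traces_pmf p s T) (A a) \<le> 2 * exp (- real T * \<epsilon>^2 / (2 * B^2))"
        unfolding A_def B_def a(1) using tail[OF p x0 a(3) T0 eps, of s] a(2) by simp
    qed
    also have "\<dots> = real (card S) * (2 * exp (- real T * \<epsilon>^2 / (2 * B^2)))" by simp
    also have "\<dots> \<le> N * (2 * (1 / (2 * N / \<delta>)))"
    proof (rule mult_mono[OF cardS])
      show "2 * exp (- real T * \<epsilon>^2 / (2 * B^2)) \<le> 2 * (1 / (2 * N / \<delta>))" using ex by linarith
      show "0 \<le> N" using N1 by linarith
      show "0 \<le> 2 * exp (- real T * \<epsilon>^2 / (2 * B^2))" by simp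
    qed
    also have "\<dots> = \<delta>" using N1 by (simp add: field_simps)
    finally have F: "measure_pmf.prob (traces_pmf p s T) (\<Union>(A ` S)) \<le> \<delta>" .
    let ?G = "{ts. \<forall>x i. length x = k \<longrightarrow> 1 \<le> i \<longrightarrow> i + k \<le> n + 1 \<longrightarrow>
                    \<bar>estf p k x i ts - kmer_density p s x i\<bar> < \<epsilon>}"
    have "measure_pmf.prob (traces_pmf p s T) (space (measure_pmf (traces_pmf p s T)) - ?G) \<le> \<delta>"
      by (rule order_trans[OF measure_pmf.finite_measure_mono[OF sub] F]) simp
    moreover have "measure_pmf.prob (traces_pmf p s T) (space (measure_pmf (traces_pmf p s T)) - ?G)
       = 1 - measure_pmf.prob (traces_pmf p s T) ?G"
      by (rule measure_pmf.prob_compl) simp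
    ultimately show "measure_pmf.prob (traces_pmf p s T) ?G \<ge> 1 - \<delta>" by simp
  qed
  show ?thesis
  proof (intro conjI allI impI)
    fix x :: "bool list" and i :: nat
    assume "length x = k" "1 \<le> i" "i + k \<le> n + 1"
    then show "\<exists>est :: bool list list \<Rightarrow> real.
         \<forall>s. length s = n \<longrightarrow>
         (\<forall>(T::nat) (\<epsilon>::real) (\<delta>::real). \<epsilon> > 0 \<longrightarrow> 0 < \<delta> \<longrightarrow> \<delta> < 1 \<longrightarrow>
            real T \<ge> ln (2 / \<delta>) * \<epsilon> powr (-2) * f_c c p n \<longrightarrow>
            measure_pmf.prob (traces_pmf p s T)
              {ts. \<bar>est ts - kmer_density p s x i\<bar> < \<epsilon>} \<ge> 1 - \<delta>)"
      using part1 by blast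
  next
    show "\<exists>est :: bool list list \<Rightarrow> bool list \<Rightarrow> nat \<Rightarrow> real.
         \<forall>s. length s = n \<longrightarrow>
         (\<forall>(T::nat) (\<epsilon>::real) (\<delta>::real). \<epsilon> > 0 \<longrightarrow> 0 < \<delta> \<longrightarrow> \<delta> < 1 \<longrightarrow>
            real T \<ge> ln (2 * real n powr (1 + c) / \<delta>) * \<epsilon> powr (-2) * f_c c p n \<longrightarrow>
            measure_pmf.prob (traces_pmf p s T)
              {ts. \<forall>x i. length x = k \<longrightarrow> 1 \<le> i \<longrightarrow> i + k \<le> n + 1 \<longrightarrow>
                    \<bar>est ts x i - kmer_density p s x i\<bar> < \<epsilon>} \<ge> 1 - \<delta>)"
      by (rule exI[of _ "\<lambda>ts x i. estf p k x i ts"]) (rule part2)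
  qed
qed


end
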